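(* Let $\Psi=(X,A,q,g)$ be a standard MDP with $X$ a compact subset of a simplex $\Delta(K)$ ($K$ finite), satisfying for all $x,y\in X$, $a\in A$, $f\in D_1$ and $\alpha,\beta\ge0$: - $|\alpha f(q(x,a))-\beta f(q(y,a))|\le\|\alpha x-\beta y\|_1$, and - $|\alpha g(x,a)-\beta g(y,a)|\le\|\alpha x-\beta y\|_1$. Let $Z=\Delta_f(X)\times[0,1]$ with metric $d((u,y),(u',y'))=\max(d_*(u,u'),|y-y'|)$. Then: 1. $\hat F$ is affine: $\hat F(\lambda z+(1-\lambda)z')=\lambda\hat F(z)+(1-\lambda)\hat F(z')$ for $z,z'\in Z$ and $\lambda\in[0,1]$ (Minkowski combination on the right). 2. $\hat F$ is non expansive: for all $z,z'\in Z$ and $w\in\hat F(z)$ there exists $w'\in\hat F(z')$ with $d(w,w')\le d(z,z')$.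
   Context: $q:X\times A\to\Delta_f(X)$ and $g:X\times A\to[0,1]$, extended linearly in the action to $\Delta_f(A)$. $D_1=\{f\in\mathcal C(\Delta(K)):\ \forall x,y,\ \forall a,b\ge0,\ af(x)-bf(y)\le\|ax-by\|_1\}$, with $f$ extended linearly to finitely supported probabilities, and $d_*(u,v)=\sup_{f\in D_1}\big(f(u)-f(v)\big)$. For $(u,y)\in Z$, $$\hat F(u,y)=\Big\{\Big(\sum_xu(x)q(x,\sigma(x)),\ \sum_xu(x)g(x,\sigma(x))\Big):\ \sigma:X\to\Delta_f(A)\Big\}.$$ *)

theory Defs
  imports "HOL-Analysis.Analysis"
begin

definition Delta_K :: "(real^'k) set" where
  "Delta_K = {x. (\<forall>i. 0 \<le> x$i) \<and> (\<Sum>i\<in>UNIV. x$i) = 1}"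

definition l1norm :: "real^'k \<Rightarrow> real" where
  "l1norm x = (\<Sum>i\<in>UNIV. \<bar>x$i\<bar>)"

definition fsupp :: "('a \<Rightarrow> real) \<Rightarrow> 'a set" where
  "fsupp u = {x. u x \<noteq> 0}"

definition fin_dist :: "'a set \<Rightarrow> ('a \<Rightarrow> real) set" where
  "fin_dist S = {u. finite (fsupp u) \<and> fsupp u \<subseteq> S \<and> (\<forall>x. 0 \<le> u x) \<and> sum u (fsupp u) = 1}"

definition lin_ext :: "('a \<Rightarrow> real) \<Rightarrow> ('a \<Rightarrow> real) \<Rightarrow> real" where
  "lin_ext f u = (\<Sum>x\<in>fsupp u. u x * f x)"

definition D1 :: "(real^'k \<Rightarrow> real) set" where
  "D1 = {f. continuous_on Delta_K f \<and>
          (\<forall>x\<in>Delta_K. \<forall>y\<in>Delta_K. \<forall>a b. 0 \<le> a \<longrightarrow> 0 \<le> b \<longrightarrow>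
             a * f x - b * f y \<le> l1norm (a *\<^sub>R x - b *\<^sub>R y))}"

definition dstar :: "(real^'k \<Rightarrow> real) \<Rightarrow> (real^'k \<Rightarrow> real) \<Rightarrow> real" where
  "dstar u v = (SUP f\<in>D1. lin_ext f u - lin_ext f v)"

definition Zset :: "(real^'k) set \<Rightarrow> ((real^'k \<Rightarrow> real) \<times> real) set" where
  "Zset X = fin_dist X \<times> {0..1}"

definition dZ :: "(real^'k \<Rightarrow> real) \<times> real \<Rightarrow> (real^'k \<Rightarrow> real) \<times> real \<Rightarrow> real" where
  "dZ z z' = max (dstar (fst z) (fst z')) \<bar>snd z - snd z'\<bar>"

definition zcomb :: "real \<Rightarrow> ('x \<Rightarrow> real) \<times> real \<Rightarrow> ('x \<Rightarrow> real) \<times> real \<Rightarrow> ('x \<Rightarrow> real) \<times> real" where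
  "zcomb l z z' = ((\<lambda>y. l * fst z y + (1 - l) * fst z' y), l * snd z + (1 - l) * snd z')"

definition act_q :: "('x \<Rightarrow> 'a \<Rightarrow> ('x \<Rightarrow> real)) \<Rightarrow> 'x \<Rightarrow> ('a \<Rightarrow> real) \<Rightarrow> ('x \<Rightarrow> real)" where
  "act_q q x \<sigma> = (\<lambda>y. \<Sum>a\<in>fsupp \<sigma>. \<sigma> a * q x a y)"

definition act_g :: "('x \<Rightarrow> 'a \<Rightarrow> real) \<Rightarrow> 'x \<Rightarrow> ('a \<Rightarrow> real) \<Rightarrow> real" where
  "act_g g x \<sigma> = (\<Sum>a\<in>fsupp \<sigma>. \<sigma> a * g x a)"

definition Fhat :: "'x set \<Rightarrow> 'a set \<Rightarrow> ('x \<Rightarrow> 'a \<Rightarrow> ('x \<Rightarrow> real)) \<Rightarrow> ('x \<Rightarrow> 'a \<Rightarrow> real)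
                    \<Rightarrow> ('x \<Rightarrow> real) \<times> real \<Rightarrow> (('x \<Rightarrow> real) \<times> real) set" where
  "Fhat X A q g z =
     {((\<lambda>y. \<Sum>x\<in>fsupp (fst z). fst z x * act_q q x (\<sigma> x) y),
       (\<Sum>x\<in>fsupp (fst z). fst z x * act_g g x (\<sigma> x))) | \<sigma>. \<forall>x\<in>X. \<sigma> x \<in> fin_dist A}"

end

theory Submission
  imports Defs
begin


lemma l1norm_nonneg: "0 \<le> l1norm x"
  by (simp add: l1norm_def sum_nonneg)

lemma l1norm_zero[simp]: "l1norm 0 = 0"
  by (simp add: l1norm_def)

lemma l1norm_triangle: "l1norm (x + y) \<le> l1norm x + l1norm y"
  unfolding l1norm_def by (simp add: sum.distrib[symmetric] sum_mono abs_triangle_ineq)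

lemma l1norm_scale: "l1norm (c *\<^sub>R x) = \<bar>c\<bar> * l1norm x"
  by (simp add: l1norm_def abs_mult sum_distrib_left)

lemma l1norm_commute: "l1norm (x - y) = l1norm (y - x)"
  by (simp add: l1norm_def abs_minus_commute)

lemma l1norm_Delta: "x \<in> Delta_K \<Longrightarrow> l1norm x = 1"
  by (simp add: l1norm_def Delta_K_def)

lemma l1norm_diff_ge: "l1norm x - l1norm y \<le> l1norm (x - y)"
  using l1norm_triangle[of "x - y" y] by simp

lemma l1norm_le_norm: "l1norm (x::real^'k) \<le> real CARD('k) * norm x"
proof -
  have "l1norm x \<le> (\<Sum>i\<in>(UNIV::'k set). norm x)"
    unfolding l1norm_def by (rule sum_mono) (metis component_le_norm_cart real_norm_def)
  then show ?thesis by simp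
qed

lemma D1_bound:
  assumes "f \<in> D1" "x \<in> Delta_K" shows "\<bar>f x\<bar> \<le> 1"
proof -
  from assms have h: "\<And>a b. 0 \<le> a \<Longrightarrow> 0 \<le> b \<Longrightarrow> a * f x - b * f x \<le> l1norm (a *\<^sub>R x - b *\<^sub>R x)"
    unfolding D1_def by blast
  from h[of 1 0] have "f x \<le> 1" using l1norm_Delta[OF assms(2)] by simp
  moreover from h[of 0 1] have "- f x \<le> 1" using l1norm_Delta[OF assms(2)] l1norm_scale[of "-1" x] by simp
  ultimately show ?thesis by simp
qed

lemma zero_D1: "(\<lambda>_. 0) \<in> D1"
  unfolding D1_def by (simp add: l1norm_nonneg)




lemma mm_real_aux:
  fixes a b a' b' :: real
  assumes "a > 0" "b \<le> 0" "a' \<le> 0" "b' > 0" "a * b' > a' * b"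
  shows "\<exists>t\<in>{0..1}. t*a+(1-t)*a' > 0 \<and> t*b+(1-t)*b' > 0"
proof -
  define D where "D = b' - a' + a - b"
  have D: "D > 0" using assms unfolding D_def by simp
  define t where "t = (b' - a') / D"
  have t1: "1 - t = (a - b) / D" using D unfolding t_def D_def by (simp add: field_simps)
  have "t*a+(1-t)*a' = (a*b' - a'*b)/D" unfolding t1 unfolding t_def using D
    by (simp add: field_simps)
  moreover have "t*b+(1-t)*b' = (a*b' - a'*b)/D" unfolding t1 unfolding t_def using D
    by (simp add: field_simps)
  moreover have "t \<in> {0..1}" using D assms unfolding t_def D_def by (auto simp: field_simps)
  ultimately show ?thesis using D assms by (intro bexI[of _ t]) auto
qed

lemma mm_two:
  fixes N1 N2 :: "'p \<Rightarrow> real" and mix :: "real \<Rightarrow> 'p \<Rightarrow> 'p \<Rightarrow> 'p"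
  assumes cl: "\<forall>\<phi>\<in>P. \<forall>\<psi>\<in>P. \<forall>s\<in>{0..1}. mix s \<phi> \<psi> \<in> P"
    and af1: "\<forall>\<phi>\<in>P. \<forall>\<psi>\<in>P. \<forall>s\<in>{0..1}. N1 (mix s \<phi> \<psi>) = s * N1 \<phi> + (1-s) * N1 \<psi>"
    and af2: "\<forall>\<phi>\<in>P. \<forall>\<psi>\<in>P. \<forall>s\<in>{0..1}. N2 (mix s \<phi> \<psi>) = s * N2 \<phi> + (1-s) * N2 \<psi>"
    and h: "\<forall>\<phi>\<in>P. N1 \<phi> \<le> d \<or> N2 \<phi> \<le> d"
  shows "\<exists>s\<in>{0..1}. \<forall>\<phi>\<in>P. s * N1 \<phi> + (1-s) * N2 \<phi> \<le> d"
proof -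
  define Aa where "Aa = (\<lambda>\<phi>. N1 \<phi> - d)"
  define Bb where "Bb = (\<lambda>\<phi>. N2 \<phi> - d)"
  define Rp where "Rp = {\<phi>\<in>P. Bb \<phi> > 0}"
  define lf where "lf = (\<lambda>\<psi>. Bb \<psi> / (Bb \<psi> - Aa \<psi>))"
  have hAB: "\<forall>\<phi>\<in>P. Aa \<phi> \<le> 0 \<or> Bb \<phi> \<le> 0" using h unfolding Aa_def Bb_def by auto
  have key: "lf \<psi> \<le> Bb \<phi> / (Bb \<phi> - Aa \<phi>)"
    if that1: "\<phi>\<in>P" and that2: "Aa \<phi> > 0" and that3: "\<psi> \<in> Rp" for \<phi> \<psi>
  proof -
    have p: "\<psi> \<in> P" "Bb \<psi> > 0" using that3 Rp_def by auto
    have a1: "Aa \<psi> \<le> 0" using hAB p by force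
    have b1: "Bb \<phi> \<le> 0" using hAB that1 that2 by force
    have "Aa \<phi> * Bb \<psi> \<le> Aa \<psi> * Bb \<phi>"
    proof (rule ccontr)
      assume "\<not> ?thesis"
      then obtain t where t: "t\<in>{0..1}" "t*Aa \<phi>+(1-t)*Aa \<psi> > 0" "t*Bb \<phi>+(1-t)*Bb \<psi> > 0"
        using mm_real_aux[of "Aa \<phi>" "Bb \<phi>" "Aa \<psi>" "Bb \<psi>"] that2 b1 a1 p by auto
      have m: "mix t \<phi> \<psi> \<in> P" using cl that1 p t by auto
      have "Aa (mix t \<phi> \<psi>) = t*Aa \<phi>+(1-t)*Aa \<psi>" "Bb (mix t \<phi> \<psi>) = t*Bb \<phi>+(1-t)*Bb \<psi>"
        using af1 af2 that1 p t unfolding Aa_def Bb_def by (auto simp: algebra_simps)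
      then show False using hAB m t by force
    qed
    then have "Bb \<phi> * (Bb \<psi> - Aa \<psi>) \<le> Bb \<psi> * (Bb \<phi> - Aa \<phi>)"
      by (simp add: right_diff_distrib mult.commute)
    then show ?thesis unfolding lf_def using that2 b1 a1 p
      by (simp add: divide_simps)
  qed
  define s where "s = (if Rp = {} then 0 else Sup (lf ` Rp))"
  have lf01: "0 \<le> lf \<psi> \<and> lf \<psi> \<le> 1" if "\<psi> \<in> Rp" for \<psi>
  proof -
    have "Aa \<psi> \<le> 0" "Bb \<psi> > 0" using that hAB Rp_def by force+
    then show ?thesis unfolding lf_def by (simp add: divide_simps)
  qed
  have bdd: "bdd_above (lf ` Rp)" using lf01 by (auto intro: bdd_aboveI[of _ 1])
  have s01: "s \<in> {0..1}"
  proof (cases "Rp = {}")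
    case False
    then obtain \<psi> where "\<psi> \<in> Rp" by auto
    then have "lf \<psi> \<le> Sup (lf ` Rp)" using bdd by (intro cSup_upper) auto
    moreover have "Sup (lf ` Rp) \<le> 1" using False lf01 by (intro cSup_least) auto
    ultimately show ?thesis using False lf01[OF \<open>\<psi>\<in>Rp\<close>] s_def by auto
  qed (simp add: s_def)
  show ?thesis
  proof (intro bexI[OF _ s01] ballI)
    fix \<phi> assume \<phi>: "\<phi> \<in> P"
    have goal: "s * Aa \<phi> + (1-s) * Bb \<phi> \<le> 0"
    proof (cases "Aa \<phi> > 0")
      case True
      have b1: "Bb \<phi> \<le> 0" using hAB \<phi> True by force
      have r0: "0 \<le> Bb \<phi> / (Bb \<phi> - Aa \<phi>)" using True b1 by (simp add: divide_simps)
      have "s \<le> Bb \<phi> / (Bb \<phi> - Aa \<phi>)"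
      proof (cases "Rp = {}")
        case False
        then show ?thesis unfolding s_def using key[OF \<phi> True] by (auto intro: cSup_least)
      qed (use r0 s_def in auto)
      then have "s * (Aa \<phi> - Bb \<phi>) \<le> Bb \<phi> / (Bb \<phi> - Aa \<phi>) * (Aa \<phi> - Bb \<phi>)"
        using True b1 by (intro mult_right_mono) auto
      also have "\<dots> = - Bb \<phi>" using True b1 by (simp add: divide_simps algebra_simps)
      finally show ?thesis by (simp add: algebra_simps)
    next
      case False
      show ?thesis
      proof (cases "Bb \<phi> > 0")
        case True
        then have R: "\<phi> \<in> Rp" using \<phi> Rp_def by auto
        then have "lf \<phi> \<le> s" unfolding s_def using bdd by (auto intro: cSup_upper)
        then have "lf \<phi> * (Bb \<phi> - Aa \<phi>) \<le> s * (Bb \<phi> - Aa \<phi>)"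
          using True False by (intro mult_right_mono) auto
        moreover have "lf \<phi> * (Bb \<phi> - Aa \<phi>) = Bb \<phi>" using True False unfolding lf_def
          by (simp add: divide_simps)
        ultimately show ?thesis by (simp add: algebra_simps)
      next
        case False2: False
        have "s * Aa \<phi> \<le> 0" using s01 False by (simp add: mult_nonneg_nonpos)
        moreover have "(1-s) * Bb \<phi> \<le> 0" using s01 False2 by (simp add: mult_nonneg_nonpos)
        ultimately show ?thesis by simp
      qed
    qed
    then show "s * N1 \<phi> + (1-s) * N2 \<phi> \<le> d" unfolding Aa_def Bb_def by (simp add: algebra_simps)
  qed
qed

lemma mm_finite:
  fixes M :: "'j \<Rightarrow> 'p \<Rightarrow> real" and mix :: "real \<Rightarrow> 'p \<Rightarrow> 'p \<Rightarrow> 'p"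
  assumes "finite J" "J \<noteq> {}"
  shows "\<forall>P. (\<forall>\<phi>\<in>P. \<forall>\<psi>\<in>P. \<forall>s\<in>{0..1}. mix s \<phi> \<psi> \<in> P) \<longrightarrow>
    (\<forall>j\<in>J. \<forall>\<phi>\<in>P. \<forall>\<psi>\<in>P. \<forall>s\<in>{0..1}. M j (mix s \<phi> \<psi>) = s * M j \<phi> + (1-s) * M j \<psi>) \<longrightarrow>
    (\<forall>\<phi>\<in>P. \<exists>j\<in>J. M j \<phi> \<le> d) \<longrightarrow>
    (\<exists>\<mu>. (\<forall>j\<in>J. 0 \<le> \<mu> j) \<and> sum \<mu> J = 1 \<and> (\<forall>\<phi>\<in>P. (\<Sum>j\<in>J. \<mu> j * M j \<phi>) \<le> d))"
  using assms
proof (induction J rule: finite_ne_induct)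
  case (singleton j)
  show ?case by (intro allI impI exI[of _ "\<lambda>_. 1"]) auto
next
  case (insert k J)
  show ?case
  proof (intro allI impI)
    fix P :: "'p set"
    assume cl: "\<forall>\<phi>\<in>P. \<forall>\<psi>\<in>P. \<forall>s\<in>{0..1}. mix s \<phi> \<psi> \<in> P"
      and af: "\<forall>j\<in>insert k J. \<forall>\<phi>\<in>P. \<forall>\<psi>\<in>P. \<forall>s\<in>{0..1}. M j (mix s \<phi> \<psi>) = s * M j \<phi> + (1-s) * M j \<psi>"
      and h: "\<forall>\<phi>\<in>P. \<exists>j\<in>insert k J. M j \<phi> \<le> d"
    define P' where "P' = {\<phi>\<in>P. M k \<phi> > d}"
    have cl': "\<forall>\<phi>\<in>P'. \<forall>\<psi>\<in>P'. \<forall>s\<in>{0..1}. mix s \<phi> \<psi> \<in> P'"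
    proof (intro ballI)
      fix \<phi> \<psi> s assume a: "\<phi> \<in> P'" "\<psi> \<in> P'" "s \<in> {0..1::real}"
      have "M k (mix s \<phi> \<psi>) = s * M k \<phi> + (1-s) * M k \<psi>" using af a P'_def by auto
      moreover have "s * M k \<phi> + (1-s) * M k \<psi> > s * d + (1-s) * d"
      proof (cases "s = 0")
        case True then show ?thesis using a P'_def by auto
      next
        case False
        then have "s * M k \<phi> > s * d" using a P'_def by auto
        moreover have "(1-s) * M k \<psi> \<ge> (1-s) * d" using a P'_def by (intro mult_left_mono) auto
        ultimately show ?thesis by linarith
      qed
      ultimately show "mix s \<phi> \<psi> \<in> P'" using a cl P'_def by (auto simp: algebra_simps)
    qed
    have h': "\<forall>\<phi>\<in>P'. \<exists>j\<in>J. M j \<phi> \<le> d" using h P'_def by force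
    obtain \<mu>' where \<mu>': "\<forall>j\<in>J. 0 \<le> \<mu>' j" "sum \<mu>' J = 1" "\<forall>\<phi>\<in>P'. (\<Sum>j\<in>J. \<mu>' j * M j \<phi>) \<le> d"
    proof -
      have af': "\<forall>j\<in>J. \<forall>\<phi>\<in>P'. \<forall>\<psi>\<in>P'. \<forall>s\<in>{0..1}. M j (mix s \<phi> \<psi>) = s * M j \<phi> + (1-s) * M j \<psi>"
        using af P'_def by auto
      note IHP = spec[OF insert.IH, of P']
      show ?thesis using mp[OF mp[OF mp[OF IHP cl'] af'] h'] that by blast
    qed
    define N1 where "N1 = (\<lambda>\<phi>. \<Sum>j\<in>J. \<mu>' j * M j \<phi>)"
    have af1: "\<forall>\<phi>\<in>P. \<forall>\<psi>\<in>P. \<forall>s\<in>{0..1}. N1 (mix s \<phi> \<psi>) = s * N1 \<phi> + (1-s) * N1 \<psi>"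
    proof (intro ballI)
      fix \<phi> \<psi> s assume a: "\<phi> \<in> P" "\<psi> \<in> P" "s \<in> {0..1::real}"
      have "N1 (mix s \<phi> \<psi>) = (\<Sum>j\<in>J. s * (\<mu>' j * M j \<phi>) + (1-s) * (\<mu>' j * M j \<psi>))"
        unfolding N1_def
      proof (intro sum.cong refl)
        fix j assume "j \<in> J"
        then have eq: "M j (mix s \<phi> \<psi>) = s * M j \<phi> + (1-s) * M j \<psi>" using af a by auto
        show "\<mu>' j * M j (mix s \<phi> \<psi>) = s * (\<mu>' j * M j \<phi>) + (1-s) * (\<mu>' j * M j \<psi>)"
          unfolding eq by (simp add: algebra_simps)
      qed
      also have "\<dots> = s * N1 \<phi> + (1-s) * N1 \<psi>"
        unfolding N1_def by (simp add: sum.distrib sum_distrib_left)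
      finally show "N1 (mix s \<phi> \<psi>) = s * N1 \<phi> + (1-s) * N1 \<psi>" .
    qed
    have af2: "\<forall>\<phi>\<in>P. \<forall>\<psi>\<in>P. \<forall>s\<in>{0..1}. M k (mix s \<phi> \<psi>) = s * M k \<phi> + (1-s) * M k \<psi>"
      using af by auto
    have h2: "\<forall>\<phi>\<in>P. N1 \<phi> \<le> d \<or> M k \<phi> \<le> d"
      using \<mu>'(3) P'_def N1_def by force
    obtain s where s: "s \<in> {0..1}" "\<forall>\<phi>\<in>P. s * N1 \<phi> + (1-s) * M k \<phi> \<le> d"
      using mm_two[OF cl af1 af2 h2] by blast
    define \<mu> where "\<mu> = (\<lambda>j. if j = k then 1 - s else s * \<mu>' j)"
    have sJ: "(\<Sum>j\<in>J. \<mu> j * f j) = s * (\<Sum>j\<in>J. \<mu>' j * f j)" for f :: "'j \<Rightarrow> real"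
    proof -
      have "(\<Sum>j\<in>J. \<mu> j * f j) = (\<Sum>j\<in>J. s * (\<mu>' j * f j))"
        by (rule sum.cong) (use insert.hyps in \<open>auto simp: \<mu>_def\<close>)
      then show ?thesis by (simp add: sum_distrib_left)
    qed
    show "\<exists>\<mu>. (\<forall>j\<in>insert k J. 0 \<le> \<mu> j) \<and> sum \<mu> (insert k J) = 1 \<and>
              (\<forall>\<phi>\<in>P. (\<Sum>j\<in>insert k J. \<mu> j * M j \<phi>) \<le> d)"
    proof (intro exI[of _ \<mu>] conjI ballI)
      show "0 \<le> \<mu> j" if "j \<in> insert k J" for j using that s \<mu>'(1) \<mu>_def by auto
      have "sum \<mu> (insert k J) = (1 - s) + (\<Sum>j\<in>J. \<mu> j * 1)"
        using insert.hyps \<mu>_def by simp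
      then show "sum \<mu> (insert k J) = 1" using sJ[of "\<lambda>_. 1"] \<mu>'(2) by simp
      fix \<phi> assume "\<phi> \<in> P"
      have "(\<Sum>j\<in>insert k J. \<mu> j * M j \<phi>) = (1-s) * M k \<phi> + s * N1 \<phi>"
        using insert.hyps sJ[of "\<lambda>j. M j \<phi>"] unfolding N1_def by (simp add: \<mu>_def)
      then show "(\<Sum>j\<in>insert k J. \<mu> j * M j \<phi>) \<le> d" using s \<open>\<phi>\<in>P\<close> by auto
    qed
  qed
qed




lemma sum_fsupp_ext:
  assumes "finite U" "fsupp v \<subseteq> U"
  shows "(\<Sum>t\<in>fsupp v. v t * k t) = (\<Sum>t\<in>U. v t * k t)"
  by (rule sum.mono_neutral_left) (use assms in \<open>auto simp: fsupp_def\<close>)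

lemma lin_ext_ext:
  assumes "finite U" "fsupp v \<subseteq> U"
  shows "lin_ext f v = (\<Sum>t\<in>U. v t * f t)"
  unfolding lin_ext_def using sum_fsupp_ext[OF assms] .

lemma fsupp_sum_sub: "fsupp (\<lambda>t. \<Sum>i\<in>I. c i * v i t) \<subseteq> (\<Union>i\<in>I. fsupp (v i))"
proof
  fix t assume "t \<in> fsupp (\<lambda>t. \<Sum>i\<in>I. c i * v i t)"
  then have "(\<Sum>i\<in>I. c i * v i t) \<noteq> 0" by (simp add: fsupp_def)
  then obtain i where "i \<in> I" "c i * v i t \<noteq> 0" by (meson sum.neutral)
  then show "t \<in> (\<Union>i\<in>I. fsupp (v i))" by (auto simp: fsupp_def)
qed

lemma finite_fsupp_sum:
  assumes "finite I" "\<forall>i\<in>I. finite (fsupp (v i))"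
  shows "finite (fsupp (\<lambda>t. \<Sum>i\<in>I. c i * v i t))"
  using fsupp_sum_sub[where I=I and c=c and v=v] assms by (meson finite_UN_I finite_subset)

lemma lin_ext_sum:
  assumes "finite I" "\<forall>i\<in>I. finite (fsupp (v i))"
  shows "lin_ext f (\<lambda>t. \<Sum>i\<in>I. c i * v i t) = (\<Sum>i\<in>I. c i * lin_ext f (v i))"
proof -
  define U where "U = (\<Union>i\<in>I. fsupp (v i))"
  have U: "finite U" using assms U_def by auto
  have "lin_ext f (\<lambda>t. \<Sum>i\<in>I. c i * v i t) = (\<Sum>t\<in>U. (\<Sum>i\<in>I. c i * v i t) * f t)"
    using lin_ext_ext[OF U] fsupp_sum_sub[where I=I and c=c and v=v] U_def by blast
  also have "\<dots> = (\<Sum>i\<in>I. c i * (\<Sum>t\<in>U. v i t * f t))"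
    by (simp add: sum_distrib_left sum_distrib_right sum.swap[of _ U] mult.assoc)
  also have "\<dots> = (\<Sum>i\<in>I. c i * lin_ext f (v i))"
  proof (intro sum.cong refl)
    fix i assume "i \<in> I"
    then have "fsupp (v i) \<subseteq> U" using U_def by auto
    then show "c i * (\<Sum>t\<in>U. v i t * f t) = c i * lin_ext f (v i)" using lin_ext_ext[OF U] by simp
  qed
  finally show ?thesis .
qed

lemma lin_ext_lin:
  "lin_ext (\<lambda>x. s * F1 x + r * F2 x) v = s * lin_ext F1 v + r * lin_ext F2 v"
  unfolding lin_ext_def by (simp add: sum.distrib sum_distrib_left algebra_simps)

lemma lin_ext_scale: "lin_ext (\<lambda>x. t * f x) v = t * lin_ext f v"
  unfolding lin_ext_def by (simp add: sum_distrib_left algebra_simps)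

lemma lin_ext_zero[simp]: "lin_ext (\<lambda>x. 0) v = 0"
  unfolding lin_ext_def by simp

lemma act_q_ext:
  assumes "finite B" "fsupp \<rho> \<subseteq> B"
  shows "act_q q x \<rho> y = (\<Sum>a\<in>B. \<rho> a * q x a y)"
  unfolding act_q_def using sum_fsupp_ext[OF assms] .

lemma act_g_ext:
  assumes "finite B" "fsupp \<rho> \<subseteq> B"
  shows "act_g g x \<rho> = (\<Sum>a\<in>B. \<rho> a * g x a)"
  unfolding act_g_def using sum_fsupp_ext[OF assms] .

lemma fin_dist_sum:
  assumes "u \<in> fin_dist S" "finite U" "fsupp u \<subseteq> U"
  shows "sum u U = 1"
proof -
  have "sum u U = sum u (fsupp u)"
    by (rule sum.mono_neutral_right) (use assms in \<open>auto simp: fsupp_def\<close>)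
  then show ?thesis using assms by (simp add: fin_dist_def)
qed




lemma D1_extension:
  fixes T :: "(real^'k) set" and H :: "real^'k \<Rightarrow> real"
  assumes fin: "finite T" and ne: "T \<noteq> {}" and TD: "T \<subseteq> Delta_K"
    and lip: "\<forall>x\<in>T. \<forall>y\<in>T. \<forall>\<alpha> \<beta>. 0 \<le> \<alpha> \<longrightarrow> 0 \<le> \<beta> \<longrightarrow>
               \<alpha> * H x - \<beta> * H y \<le> l1norm (\<alpha> *\<^sub>R x - \<beta> *\<^sub>R y)"
  shows "\<exists>f\<in>D1. \<forall>x\<in>T. f x = H x"
proof -
  define Q where "Q = (\<lambda>z. {s * H x + l1norm (z - s *\<^sub>R x) | x s. x \<in> T \<and> 0 \<le> s})"
  define f where "f = (\<lambda>z. Inf (Q z))"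
  obtain x0 where x0: "x0 \<in> T" using ne by auto
  have Hlow: "H x \<ge> -1" if "x \<in> T" for x
    using lip[rule_format, OF that that, of 0 1] l1norm_Delta[of x] TD that l1norm_scale[of "-1" x]
    by auto
  have Qne: "Q z \<noteq> {}" for z using x0 Q_def by blast
  have Qlow: "v \<ge> - l1norm z" if vQ: "v \<in> Q z" for v z
  proof -
    obtain x s where xs: "x \<in> T" "0 \<le> s" "v = s * H x + l1norm (z - s *\<^sub>R x)"
      using vQ Q_def by auto
    have "l1norm (s *\<^sub>R x) - l1norm z \<le> l1norm (s *\<^sub>R x - z)" by (rule l1norm_diff_ge)
    then have "s - l1norm z \<le> l1norm (z - s *\<^sub>R x)"
      using l1norm_scale[of s x] l1norm_Delta[of x] TD xs l1norm_commute[of z] by auto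
    moreover have "s * H x \<ge> - s" using Hlow[OF xs(1)] xs(2)
      by (metis mult_left_mono mult_minus1_right)
    ultimately show ?thesis using xs by linarith
  qed
  have bdd: "bdd_below (Q z)" for z using Qlow by (meson bdd_belowI)
  have fle: "f z \<le> s * H x + l1norm (z - s *\<^sub>R x)" if "x \<in> T" "0 \<le> s" for z x s
    unfolding f_def by (rule cInf_lower[OF _ bdd]) (use that Q_def in auto)
  have fge: "c \<le> f z" if "\<And>x s. x \<in> T \<Longrightarrow> 0 \<le> s \<Longrightarrow> c \<le> s * H x + l1norm (z - s *\<^sub>R x)" for c z
    unfolding f_def using Qne by (rule cInf_greatest) (use that Q_def in auto)
  have fT: "f x = H x" if "x \<in> T" for x
  proof (rule antisym)
    show "f x \<le> H x" using fle[OF that, of 1 x] by simp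
    show "H x \<le> f x"
    proof (rule fge)
      fix y and s :: real assume "y \<in> T" "0 \<le> s"
      then show "H x \<le> s * H y + l1norm (x - s *\<^sub>R y)"
        using lip[rule_format, OF that \<open>y\<in>T\<close>, of 1 s] by simp
    qed
  qed
  have key: "a * f z - b * f z' \<le> l1norm (a *\<^sub>R z - b *\<^sub>R z')"
    if z: "z \<in> Delta_K" "z' \<in> Delta_K" and ab: "0 \<le> a" "0 \<le> b" for z z' a b
  proof (cases "b = 0")
    case True
    have "f z \<le> 1" using fle[OF x0, of 0 z] l1norm_Delta[OF z(1)] by simp
    then have "a * f z \<le> a" using ab by (metis mult_left_mono mult.right_neutral)
    then show ?thesis using True l1norm_scale[of a z] l1norm_Delta[OF z(1)] ab by simp
  next
    case False
    then have bpos: "b > 0" using ab by auto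
    define N where "N = l1norm (a *\<^sub>R z - b *\<^sub>R z')"
    have "(a * f z - N) / b \<le> f z'"
    proof (rule fge)
      fix x and s :: real assume xs: "x \<in> T" "0 \<le> s"
      have "a * f z \<le> b * (s * H x + l1norm (z' - s *\<^sub>R x)) + N"
      proof (cases "a = 0")
        case True
        have "N = b" unfolding N_def using True l1norm_scale[of "-b" z'] l1norm_Delta[OF z(2)] bpos by simp
        moreover have "- 1 \<le> s * H x + l1norm (z' - s *\<^sub>R x)"
          using Qlow[of _ z'] l1norm_Delta[OF z(2)] xs Q_def by fastforce
        then have "- b \<le> b * (s * H x + l1norm (z' - s *\<^sub>R x))" using bpos
          by (metis mult_left_mono mult_minus1_right less_imp_le)
        ultimately show ?thesis using True by simp
      next
        case False
        then have apos: "a > 0" using ab by auto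
        have "f z \<le> (b * s / a) * H x + l1norm (z - (b * s / a) *\<^sub>R x)"
          using fle[OF xs(1), of "b * s / a" z] apos bpos xs by simp
        then have "a * f z \<le> a * ((b * s / a) * H x + l1norm (z - (b * s / a) *\<^sub>R x))"
          using apos by simp
        also have "\<dots> = b * s * H x + l1norm (a *\<^sub>R z - (b * s) *\<^sub>R x)"
        proof -
          have "a *\<^sub>R (z - (b * s / a) *\<^sub>R x) = a *\<^sub>R z - (b * s) *\<^sub>R x" using apos
            by (simp add: algebra_simps)
          then have "l1norm (a *\<^sub>R z - (b * s) *\<^sub>R x) = a * l1norm (z - (b * s / a) *\<^sub>R x)"
            using l1norm_scale[of a "z - (b * s / a) *\<^sub>R x"] apos by simp
          then show ?thesis using apos by (simp add: algebra_simps)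
        qed
        also have "l1norm (a *\<^sub>R z - (b * s) *\<^sub>R x) \<le> N + b * l1norm (z' - s *\<^sub>R x)"
        proof -
          have "a *\<^sub>R z - (b * s) *\<^sub>R x = (a *\<^sub>R z - b *\<^sub>R z') + b *\<^sub>R (z' - s *\<^sub>R x)"
            by (simp add: algebra_simps)
          then show ?thesis unfolding N_def using l1norm_triangle l1norm_scale[of b] bpos
            by (metis abs_of_nonneg less_imp_le)
        qed
        finally show ?thesis by (simp add: algebra_simps)
      qed
      then show "(a * f z - N) / b \<le> s * H x + l1norm (z' - s *\<^sub>R x)"
        using bpos by (simp add: divide_simps algebra_simps)
    qed
    then have "a * f z - N \<le> b * f z'" using bpos by (simp add: divide_simps mult.commute)
    then show ?thesis unfolding N_def by simp
  qed
  have lipf: "dist (f x) (f y) \<le> real CARD('k) * dist x y" if "x \<in> Delta_K" "y \<in> Delta_K" for x y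
  proof -
    have "f x - f y \<le> l1norm (x - y)" using key[OF that, of 1 1] by simp
    moreover have "f y - f x \<le> l1norm (x - y)" using key[OF that(2,1), of 1 1] l1norm_commute[of y x] by simp
    ultimately have "\<bar>f x - f y\<bar> \<le> l1norm (x - y)" by simp
    also have "\<dots> \<le> real CARD('k) * norm (x - y)" by (rule l1norm_le_norm)
    finally show ?thesis by (simp add: dist_norm)
  qed
  have "continuous_on Delta_K f"
    by (rule lipschitz_on_continuous_on[of "real CARD('k)"]) (use lipf in \<open>auto simp: lipschitz_on_def\<close>)
  then have "f \<in> D1" unfolding D1_def using key by blast
  then show ?thesis using fT by blast
qed




definition elt :: "('x \<Rightarrow> 'a \<Rightarrow> ('x \<Rightarrow> real)) \<Rightarrow> ('x \<Rightarrow> 'a \<Rightarrow> real) \<Rightarrow> ('x \<Rightarrow> real) \<Rightarrow> ('x \<Rightarrow> ('a \<Rightarrow> real)) \<Rightarrow> ('x \<Rightarrow> real) \<times> real" where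
  "elt q g u \<sigma> = ((\<lambda>y. \<Sum>x\<in>fsupp u. u x * act_q q x (\<sigma> x) y), (\<Sum>x\<in>fsupp u. u x * act_g g x (\<sigma> x)))"

lemma Fhat_elt: "Fhat X A q g z = {elt q g (fst z) \<sigma> | \<sigma>. \<forall>x\<in>X. \<sigma> x \<in> fin_dist A}"
  unfolding Fhat_def elt_def by simp

lemma elt_U:
  assumes "finite U" "fsupp v \<subseteq> U"
  shows "elt q g v \<sigma> = ((\<lambda>t. \<Sum>x\<in>U. v x * act_q q x (\<sigma> x) t), (\<Sum>x\<in>U. v x * act_g g x (\<sigma> x)))"
  unfolding elt_def using sum_fsupp_ext[OF assms] by simp

lemma fin_dist_nonneg: "u \<in> fin_dist S \<Longrightarrow> 0 \<le> u x"
  by (simp add: fin_dist_def)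

lemma fin_dist_fin: "u \<in> fin_dist S \<Longrightarrow> finite (fsupp u)"
  by (simp add: fin_dist_def)

lemma fin_dist_sub: "u \<in> fin_dist S \<Longrightarrow> fsupp u \<subseteq> S"
  by (simp add: fin_dist_def)

lemma affine_part:
  fixes X :: "'x set" and A :: "'a set"
  assumes u: "u \<in> fin_dist X" and u': "u' \<in> fin_dist X" and l: "l \<in> {0..1}"
  shows "Fhat X A q g (zcomb l (u,y) (u',y')) =
         {zcomb l w w' | w w'. w \<in> Fhat X A q g (u,y) \<and> w' \<in> Fhat X A q g (u',y')}"
proof -
  define ul where "ul = (\<lambda>x. l * u x + (1-l) * u' x)"
  define U where "U = fsupp u \<union> fsupp u'"
  have U: "finite U" using u u' U_def fin_dist_fin by auto
  have UX: "U \<subseteq> X" using u u' U_def fin_dist_sub by auto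
  have ulU: "fsupp ul \<subseteq> U" unfolding ul_def U_def fsupp_def by auto
  have uU: "fsupp u \<subseteq> U" "fsupp u' \<subseteq> U" unfolding U_def by auto
  have zc: "zcomb l (u,y) (u',y') = (ul, l*y + (1-l)*y')" unfolding zcomb_def ul_def by simp
  have unn: "0 \<le> u x" "0 \<le> u' x" for x using fin_dist_nonneg[OF u] fin_dist_nonneg[OF u'] by auto
  have l01: "0 \<le> l" "0 \<le> 1 - l" using l by auto
  show ?thesis
  proof (rule set_eqI iffI)+
    fix w assume "w \<in> Fhat X A q g (zcomb l (u,y) (u',y'))"
    then obtain \<sigma> where \<sigma>: "\<forall>x\<in>X. \<sigma> x \<in> fin_dist A" "w = elt q g ul \<sigma>"
      unfolding Fhat_elt zc by auto
    have "w = zcomb l (elt q g u \<sigma>) (elt q g u' \<sigma>)"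
      unfolding \<sigma>(2) elt_U[OF U ulU] elt_U[OF U uU(1)] elt_U[OF U uU(2)] zcomb_def
      by (simp add: ul_def distrib_right sum.distrib sum_distrib_left mult.assoc)
    moreover have "elt q g u \<sigma> \<in> Fhat X A q g (u,y)" "elt q g u' \<sigma> \<in> Fhat X A q g (u',y')"
      unfolding Fhat_elt using \<sigma>(1) by auto
    ultimately show "w \<in> {zcomb l w w' | w w'. w \<in> Fhat X A q g (u,y) \<and> w' \<in> Fhat X A q g (u',y')}"
      by blast
  next
    fix w assume "w \<in> {zcomb l w w' | w w'. w \<in> Fhat X A q g (u,y) \<and> w' \<in> Fhat X A q g (u',y')}"
    then obtain \<sigma>1 \<sigma>2 where s1: "\<forall>x\<in>X. \<sigma>1 x \<in> fin_dist A" and s2: "\<forall>x\<in>X. \<sigma>2 x \<in> fin_dist A"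
      and w: "w = zcomb l (elt q g u \<sigma>1) (elt q g u' \<sigma>2)"
      unfolding Fhat_elt by auto
    define \<sigma> where "\<sigma> = (\<lambda>x. if ul x = 0 then \<sigma>1 x
        else (\<lambda>a. (l * u x * \<sigma>1 x a + (1-l) * u' x * \<sigma>2 x a) / ul x))"
    have ulnn: "0 \<le> ul x" for x unfolding ul_def using unn l01 by simp
    have B: "finite (fsupp (\<sigma>1 x) \<union> fsupp (\<sigma>2 x))" "fsupp (\<sigma>1 x) \<union> fsupp (\<sigma>2 x) \<subseteq> A"
      if "x \<in> X" for x using s1 s2 that fin_dist_fin fin_dist_sub by blast+
    have sB: "fsupp (\<sigma> x) \<subseteq> fsupp (\<sigma>1 x) \<union> fsupp (\<sigma>2 x)" for x
      unfolding \<sigma>_def fsupp_def by auto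
    have \<sigma>ok: "\<sigma> x \<in> fin_dist A" if x: "x \<in> X" for x
    proof (cases "ul x = 0")
      case True then show ?thesis using s1 x \<sigma>_def by simp
    next
      case False
      then have pos: "ul x > 0" using ulnn[of x] by simp
      let ?B = "fsupp (\<sigma>1 x) \<union> fsupp (\<sigma>2 x)"
      have "sum (\<sigma> x) (fsupp (\<sigma> x)) = sum (\<sigma> x) ?B"
        by (rule sum.mono_neutral_left) (use B[OF x] sB in \<open>auto simp: fsupp_def\<close>)
      also have "\<dots> = (l * u x * sum (\<sigma>1 x) ?B + (1-l) * u' x * sum (\<sigma>2 x) ?B) / ul x"
        unfolding \<sigma>_def using False
        by (simp add: sum_divide_distrib[symmetric] sum.distrib sum_distrib_left)
      also have "\<dots> = 1"
        using fin_dist_sum[OF s1[rule_format, OF x] B(1)[OF x]] fin_dist_sum[OF s2[rule_format, OF x] B(1)[OF x]]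
          pos unfolding ul_def by auto
      finally have "sum (\<sigma> x) (fsupp (\<sigma> x)) = 1" .
      moreover have "0 \<le> \<sigma> x a" for a
        unfolding \<sigma>_def using False pos unn l01 fin_dist_nonneg[OF s1[rule_format, OF x]] fin_dist_nonneg[OF s2[rule_format, OF x]]
        by (auto intro!: divide_nonneg_pos add_nonneg_nonneg mult_nonneg_nonneg)
      ultimately show ?thesis unfolding fin_dist_def using B[OF x] sB[of x]
        by (auto intro: finite_subset)
    qed
    have cq: "ul x * act_q q x (\<sigma> x) t = l * u x * act_q q x (\<sigma>1 x) t + (1-l) * u' x * act_q q x (\<sigma>2 x) t"
     and cg: "ul x * act_g g x (\<sigma> x) = l * u x * act_g g x (\<sigma>1 x) + (1-l) * u' x * act_g g x (\<sigma>2 x)"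
      if x: "x \<in> X" for x t
    proof -
      let ?B = "fsupp (\<sigma>1 x) \<union> fsupp (\<sigma>2 x)"
      have fs: "fsupp (\<sigma>1 x) \<subseteq> ?B" "fsupp (\<sigma>2 x) \<subseteq> ?B" "fsupp (\<sigma> x) \<subseteq> ?B" using sB[of x] by auto
      note e1 = act_q_ext[OF B(1)[OF x] fs(1)] act_q_ext[OF B(1)[OF x] fs(2)] act_q_ext[OF B(1)[OF x] fs(3)]
          act_g_ext[OF B(1)[OF x] fs(1)] act_g_ext[OF B(1)[OF x] fs(2)] act_g_ext[OF B(1)[OF x] fs(3)]
      show "ul x * act_q q x (\<sigma> x) t = l * u x * act_q q x (\<sigma>1 x) t + (1-l) * u' x * act_q q x (\<sigma>2 x) t"
      proof (cases "ul x = 0")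
        case True
        then have z: "l * u x = 0" "(1-l) * u' x = 0" unfolding ul_def using unn l01
          by (smt (verit) mult_nonneg_nonneg)+
        show ?thesis unfolding z True by simp
      next
        case False
        have sa: "ul x * \<sigma> x a = l*u x*\<sigma>1 x a + (1-l)*u' x*\<sigma>2 x a" for a
          using False unfolding \<sigma>_def by simp
        have "ul x * act_q q x (\<sigma> x) t = (\<Sum>a\<in>?B. (ul x * \<sigma> x a) * q x a t)"
          by (simp add: e1 sum_distrib_left mult.assoc)
        also have "\<dots> = (\<Sum>a\<in>?B. (l*u x*\<sigma>1 x a + (1-l)*u' x*\<sigma>2 x a) * q x a t)"
          by (simp add: sa)
        also have "\<dots> = l * u x * act_q q x (\<sigma>1 x) t + (1-l) * u' x * act_q q x (\<sigma>2 x) t"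
          by (simp add: e1 distrib_right sum.distrib sum_distrib_left mult.assoc)
        finally show ?thesis .
      qed
      show "ul x * act_g g x (\<sigma> x) = l * u x * act_g g x (\<sigma>1 x) + (1-l) * u' x * act_g g x (\<sigma>2 x)"
      proof (cases "ul x = 0")
        case True
        then have z: "l * u x = 0" "(1-l) * u' x = 0" unfolding ul_def using unn l01
          by (smt (verit) mult_nonneg_nonneg)+
        show ?thesis unfolding z True by simp
      next
        case False
        have sa: "ul x * \<sigma> x a = l*u x*\<sigma>1 x a + (1-l)*u' x*\<sigma>2 x a" for a
          using False unfolding \<sigma>_def by simp
        have "ul x * act_g g x (\<sigma> x) = (\<Sum>a\<in>?B. (ul x * \<sigma> x a) * g x a)"
          by (simp add: e1 sum_distrib_left mult.assoc)
        also have "\<dots> = (\<Sum>a\<in>?B. (l*u x*\<sigma>1 x a + (1-l)*u' x*\<sigma>2 x a) * g x a)"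
          by (simp add: sa)
        also have "\<dots> = l * u x * act_g g x (\<sigma>1 x) + (1-l) * u' x * act_g g x (\<sigma>2 x)"
          by (simp add: e1 distrib_right sum.distrib sum_distrib_left mult.assoc)
        finally show ?thesis .
      qed
    qed
    have "w = elt q g ul \<sigma>"
    proof -
      have "elt q g ul \<sigma> = ((\<lambda>t. \<Sum>x\<in>U. l * u x * act_q q x (\<sigma>1 x) t + (1-l) * u' x * act_q q x (\<sigma>2 x) t),
               (\<Sum>x\<in>U. l * u x * act_g g x (\<sigma>1 x) + (1-l) * u' x * act_g g x (\<sigma>2 x)))"
        unfolding elt_U[OF U ulU] using cq cg UX by (auto intro!: sum.cong ext)
      then show ?thesis unfolding w elt_U[OF U uU(1)] elt_U[OF U uU(2)] zcomb_def
        by (simp add: sum.distrib sum_distrib_left mult.assoc)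
    qed
    then show "w \<in> Fhat X A q g (zcomb l (u,y) (u',y'))"
      unfolding Fhat_elt zc using \<sigma>ok by auto
  qed
qed




lemma D1_convex:
  assumes "f1 \<in> D1" "f2 \<in> D1" "0 \<le> w1" "0 \<le> w2" "w1 + w2 = 1"
  shows "(\<lambda>x. w1 * f1 x + w2 * f2 x) \<in> D1"
proof -
  have c: "continuous_on Delta_K (\<lambda>x. w1 * f1 x + w2 * f2 x)"
    using assms(1,2) unfolding D1_def by (auto intro!: continuous_intros)
  have "a * (w1 * f1 x + w2 * f2 x) - b * (w1 * f1 y + w2 * f2 y) \<le> l1norm (a *\<^sub>R x - b *\<^sub>R y)"
    if "x \<in> Delta_K" "y \<in> Delta_K" "0 \<le> a" "0 \<le> b" for x y a b
  proof -
    let ?N = "l1norm (a *\<^sub>R x - b *\<^sub>R y)"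
    have "a * f1 x - b * f1 y \<le> ?N" "a * f2 x - b * f2 y \<le> ?N"
      using assms(1,2) that unfolding D1_def by blast+
    then have "w1 * (a * f1 x - b * f1 y) \<le> w1 * ?N" "w2 * (a * f2 x - b * f2 y) \<le> w2 * ?N"
      using assms(3,4) by (auto intro: mult_left_mono)
    then have "w1 * (a * f1 x - b * f1 y) + w2 * (a * f2 x - b * f2 y) \<le> (w1 + w2) * ?N"
      by (simp add: distrib_right)
    then show ?thesis using assms(5) by (simp add: algebra_simps)
  qed
  then show ?thesis using c unfolding D1_def by blast
qed

lemma lin_ext_bound:
  assumes "f \<in> D1" "u \<in> fin_dist X" "X \<subseteq> Delta_K"
  shows "\<bar>lin_ext f u\<bar> \<le> 1"
proof -
  have "\<bar>lin_ext f u\<bar> \<le> (\<Sum>x\<in>fsupp u. \<bar>u x * f x\<bar>)"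
    unfolding lin_ext_def by (rule sum_abs)
  also have "\<dots> \<le> (\<Sum>x\<in>fsupp u. u x * 1)"
  proof (rule sum_mono)
    fix x assume x: "x \<in> fsupp u"
    have "\<bar>f x\<bar> \<le> 1" using D1_bound[OF assms(1)] x assms(2,3) fin_dist_sub by blast
    then show "\<bar>u x * f x\<bar> \<le> u x * 1" using fin_dist_nonneg[OF assms(2), of x]
      by (simp add: abs_mult mult_left_le)
  qed
  also have "\<dots> = 1" using assms(2) by (simp add: fin_dist_def)
  finally show ?thesis .
qed

lemma dstar_ge:
  assumes "f \<in> D1" "u \<in> fin_dist X" "u' \<in> fin_dist X" "X \<subseteq> Delta_K"
  shows "lin_ext f u - lin_ext f u' \<le> dstar u u'"
  unfolding dstar_def
proof (rule cSUP_upper[OF assms(1)])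
  show "bdd_above ((\<lambda>f. lin_ext f u - lin_ext f u') ` D1)"
  proof (rule bdd_aboveI2[of _ _ 2])
    fix f :: "real^'a \<Rightarrow> real" assume "f \<in> D1"
    then show "lin_ext f u - lin_ext f u' \<le> 2"
      using lin_ext_bound[OF _ assms(2,4)] lin_ext_bound[OF _ assms(3,4)] by fastforce
  qed
qed

lemma lin_ext_act_q:
  assumes "finite B" "fsupp \<rho> \<subseteq> B" "\<forall>a\<in>B. finite (fsupp (q x a))"
  shows "lin_ext F (act_q q x \<rho>) = (\<Sum>a\<in>B. \<rho> a * lin_ext F (q x a))"
proof -
  have "act_q q x \<rho> = (\<lambda>y. \<Sum>a\<in>B. \<rho> a * q x a y)" by (rule ext, rule act_q_ext[OF assms(1,2)])
  then show ?thesis using lin_ext_sum[OF assms(1,3)] by simp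
qed

lemma pay_elt:
  assumes v: "v \<in> fin_dist X"
    and B: "\<forall>x\<in>fsupp v. finite (B x) \<and> fsupp (\<rho> x) \<subseteq> B x \<and> (\<forall>a\<in>B x. finite (fsupp (q x a)))"
  shows "lin_ext F (fst (elt q g v \<rho>)) + e * snd (elt q g v \<rho>) =
     (\<Sum>x\<in>fsupp v. v x * (\<Sum>a\<in>B x. \<rho> x a * (lin_ext F (q x a) + e * g x a)))"
proof -
  have fin: "finite (fsupp v)" using v fin_dist_fin by blast
  have fa: "\<forall>x\<in>fsupp v. finite (fsupp (act_q q x (\<rho> x)))"
  proof
    fix x assume x: "x \<in> fsupp v"
    have "act_q q x (\<rho> x) = (\<lambda>y. \<Sum>a\<in>B x. \<rho> x a * q x a y)"
      using B x by (intro ext act_q_ext) auto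
    then show "finite (fsupp (act_q q x (\<rho> x)))" using finite_fsupp_sum B x by metis
  qed
  have "lin_ext F (fst (elt q g v \<rho>)) = (\<Sum>x\<in>fsupp v. v x * lin_ext F (act_q q x (\<rho> x)))"
    unfolding elt_def fst_conv by (rule lin_ext_sum[OF fin fa])
  also have "\<dots> = (\<Sum>x\<in>fsupp v. v x * (\<Sum>a\<in>B x. \<rho> x a * lin_ext F (q x a)))"
  proof (intro sum.cong refl)
    fix x assume x: "x \<in> fsupp v"
    then show "v x * lin_ext F (act_q q x (\<rho> x)) = v x * (\<Sum>a\<in>B x. \<rho> x a * lin_ext F (q x a))"
      using lin_ext_act_q[where B="B x" and \<rho>="\<rho> x" and q=q and x=x and F=F] B by simp
  qed
  finally have 1: "lin_ext F (fst (elt q g v \<rho>)) = \<dots>" .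
  have 2: "snd (elt q g v \<rho>) = (\<Sum>x\<in>fsupp v. v x * (\<Sum>a\<in>B x. \<rho> x a * g x a))"
    unfolding elt_def snd_conv
  proof (intro sum.cong refl)
    fix x assume x: "x \<in> fsupp v"
    then show "v x * act_g g x (\<rho> x) = v x * (\<Sum>a\<in>B x. \<rho> x a * g x a)"
      using act_g_ext[where B="B x" and \<rho>="\<rho> x" and g=g and x=x] B by simp
  qed
  show ?thesis unfolding 1 2
    by (simp add: sum_distrib_left sum.distrib[symmetric] distrib_left mult.left_commute)
qed




lemma nonexp_part:
  fixes X :: "(real^'k) set" and A :: "'a set"
    and q :: "real^'k \<Rightarrow> 'a \<Rightarrow> (real^'k \<Rightarrow> real)"
    and g :: "real^'k \<Rightarrow> 'a \<Rightarrow> real"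
  assumes X_sub: "X \<subseteq> Delta_K"
    and q_dist: "\<forall>x\<in>X. \<forall>a\<in>A. q x a \<in> fin_dist X"
    and q_lip: "\<forall>x\<in>X. \<forall>y\<in>X. \<forall>a\<in>A. \<forall>f\<in>D1. \<forall>\<alpha> \<beta>. 0 \<le> \<alpha> \<longrightarrow> 0 \<le> \<beta> \<longrightarrow>
        \<bar>\<alpha> * lin_ext f (q x a) - \<beta> * lin_ext f (q y a)\<bar> \<le> l1norm (\<alpha> *\<^sub>R x - \<beta> *\<^sub>R y)"
    and g_lip: "\<forall>x\<in>X. \<forall>y\<in>X. \<forall>a\<in>A. \<forall>\<alpha> \<beta>. 0 \<le> \<alpha> \<longrightarrow> 0 \<le> \<beta> \<longrightarrow>
        \<bar>\<alpha> * g x a - \<beta> * g y a\<bar> \<le> l1norm (\<alpha> *\<^sub>R x - \<beta> *\<^sub>R y)"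
    and u: "u \<in> fin_dist X" and u': "u' \<in> fin_dist X"
    and \<sigma>: "\<forall>x\<in>X. \<sigma> x \<in> fin_dist A"
  shows "\<exists>\<sigma>'. (\<forall>x\<in>X. \<sigma>' x \<in> fin_dist A) \<and>
           dstar (fst (elt q g u \<sigma>)) (fst (elt q g u' \<sigma>')) \<le> dstar u u' \<and>
           \<bar>snd (elt q g u \<sigma>) - snd (elt q g u' \<sigma>')\<bar> \<le> dstar u u'"
proof -
  define S where "S = fsupp u"
  define S' where "S' = fsupp u'"
  have finS: "finite S" "finite S'" using u u' fin_dist_fin S_def S'_def by auto
  have SX: "S \<subseteq> X" "S' \<subseteq> X" using u u' fin_dist_sub S_def S'_def by auto
  have sum1: "v \<in> fin_dist Y \<Longrightarrow> fsupp v \<noteq> {}" for v :: "'b \<Rightarrow> real" and Y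
    unfolding fin_dist_def by auto
  have Sne: "S \<noteq> {}" "S' \<noteq> {}" using sum1[OF u] sum1[OF u'] S_def S'_def by auto
  define A0 where "A0 = (\<Union>x\<in>S. fsupp (\<sigma> x))"
  have finA0: "finite A0" unfolding A0_def using finS SX \<sigma> fin_dist_fin by blast
  have A0A: "A0 \<subseteq> A" unfolding A0_def using SX \<sigma> fin_dist_sub by blast
  have A0ne: "A0 \<noteq> {}"
  proof -
    obtain x where "x \<in> S" using Sne by auto
    then have "fsupp (\<sigma> x) \<noteq> {}" using sum1 \<sigma> SX by blast
    then show ?thesis unfolding A0_def using \<open>x\<in>S\<close> by blast
  qed
  have qfin: "finite (fsupp (q x a))" if "x \<in> X" "a \<in> A" for x a
    using q_dist that fin_dist_fin by blast
  define J where "J = PiE S' (\<lambda>_. A0)"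
  have finJ: "finite J" unfolding J_def using finS finA0 by (simp add: finite_PiE)
  have Jne: "J \<noteq> {}" unfolding J_def using A0ne by (simp add: PiE_eq_empty_iff)
  have JA0: "p y \<in> A0" if "p \<in> J" "y \<in> S'" for p y using that J_def by auto
  define P :: "((real^'k \<Rightarrow> real) \<times> real) set" where "P = {(F, e). \<exists>t f. 0 \<le> t \<and> t \<le> 1 \<and> \<bar>e\<bar> \<le> 1 - t \<and> f \<in> D1 \<and> F = (\<lambda>x. t * f x)}"
  define mix where "mix = (\<lambda>(s::real) (\<phi>::(real^'k \<Rightarrow> real) \<times> real) \<psi>.
     ((\<lambda>x. s * fst \<phi> x + (1-s) * fst \<psi> x), s * snd \<phi> + (1-s) * snd \<psi>))"
  define h where "h = (\<lambda>(\<phi>::(real^'k \<Rightarrow> real) \<times> real) z a. lin_ext (fst \<phi>) (q z a) + snd \<phi> * g z a)"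
  define C where "C = (\<lambda>\<phi>. \<Sum>x\<in>S. u x * (\<Sum>a\<in>fsupp (\<sigma> x). \<sigma> x a * h \<phi> x a))"
  define M where "M = (\<lambda>p \<phi>. C \<phi> - (\<Sum>y\<in>S'. u' y * h \<phi> y (p y)))"
  define d0 where "d0 = dstar u u'"
  have clP: "\<forall>\<phi>\<in>P. \<forall>\<psi>\<in>P. \<forall>s\<in>{0..1}. mix s \<phi> \<psi> \<in> P"
  proof (intro ballI)
    fix \<phi> \<psi> and s :: real assume a: "\<phi> \<in> P" "\<psi> \<in> P" "s \<in> {0..1}"
    obtain t1 f1 where 1: "0 \<le> t1" "t1 \<le> 1" "\<bar>snd \<phi>\<bar> \<le> 1 - t1" "f1 \<in> D1" "fst \<phi> = (\<lambda>x. t1 * f1 x)"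
      using a(1) unfolding P_def by auto
    obtain t2 f2 where 2: "0 \<le> t2" "t2 \<le> 1" "\<bar>snd \<psi>\<bar> \<le> 1 - t2" "f2 \<in> D1" "fst \<psi> = (\<lambda>x. t2 * f2 x)"
      using a(2) unfolding P_def by auto
    have s: "0 \<le> s" "0 \<le> 1 - s" using a(3) by auto
    define T where "T = s * t1 + (1-s) * t2"
    have T: "0 \<le> T" "T \<le> 1" unfolding T_def using 1 2 s a(3)
      by (auto intro!: add_nonneg_nonneg mult_nonneg_nonneg convex_bound_le)
    have e: "\<bar>s * snd \<phi> + (1-s) * snd \<psi>\<bar> \<le> 1 - T"
    proof -
      have "\<bar>s * snd \<phi> + (1-s) * snd \<psi>\<bar> \<le> s * \<bar>snd \<phi>\<bar> + (1-s) * \<bar>snd \<psi>\<bar>"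
        using s by (metis abs_mult abs_of_nonneg abs_triangle_ineq)
      also have "\<dots> \<le> s * (1 - t1) + (1-s) * (1 - t2)"
        using 1 2 s by (intro add_mono mult_left_mono) auto
      finally show ?thesis unfolding T_def by (simp add: algebra_simps)
    qed
    show "mix s \<phi> \<psi> \<in> P"
    proof (cases "T = 0")
      case True
      then have z: "s * t1 = 0" "(1-s) * t2 = 0" unfolding T_def using 1 2 s
        by (smt (verit) mult_nonneg_nonneg)+
      have "fst (mix s \<phi> \<psi>) = (\<lambda>x. 0 * (\<lambda>_. 0) x)"
        unfolding mix_def using 1(5) 2(5) z by (auto simp: mult.assoc[symmetric])
      then show ?thesis unfolding P_def using e True zero_D1
        by (intro CollectI) (auto simp: mix_def case_prod_beta intro!: exI[of _ 0])
    next
      case False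
      then have Tp: "T > 0" using T by auto
      define f where "f = (\<lambda>x. (s * t1 / T) * f1 x + ((1-s) * t2 / T) * f2 x)"
      have fD: "f \<in> D1" unfolding f_def using 1 2 s Tp
        by (intro D1_convex) (auto simp: T_def add_divide_distrib[symmetric])
      have "fst (mix s \<phi> \<psi>) = (\<lambda>x. T * f x)"
        unfolding mix_def f_def using 1(5) 2(5) Tp by (auto simp: field_simps)
      then show ?thesis unfolding P_def using e T fD
        by (intro CollectI) (auto simp: mix_def case_prod_beta)
    qed
  qed
  have hmix: "h (mix s \<phi> \<psi>) z a = s * h \<phi> z a + (1-s) * h \<psi> z a" for s \<phi> \<psi> z a
    unfolding h_def mix_def by (simp only: fst_conv snd_conv lin_ext_lin) (simp add: algebra_simps)
  have Cmix: "C (mix s \<phi> \<psi>) = s * C \<phi> + (1-s) * C \<psi>" for s \<phi> \<psi>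
    unfolding C_def hmix
    by (simp add: distrib_left sum.distrib sum_distrib_left mult.left_commute)
  have Mmix: "M p (mix s \<phi> \<psi>) = s * M p \<phi> + (1-s) * M p \<psi>" for p s \<phi> \<psi>
  proof -
    have e: "(\<Sum>y\<in>S'. u' y * h (mix s \<phi> \<psi>) y (p y)) = s * (\<Sum>y\<in>S'. u' y * h \<phi> y (p y)) + (1-s) * (\<Sum>y\<in>S'. u' y * h \<psi> y (p y))"
      unfolding hmix by (simp add: distrib_left sum.distrib sum_distrib_left mult.left_commute)
    show ?thesis unfolding M_def Cmix e by (simp add: algebra_simps)
  qed
  have best: "\<forall>\<phi>\<in>P. \<exists>p\<in>J. M p \<phi> \<le> d0"
  proof
    fix \<phi> assume "\<phi> \<in> P"
    then obtain t f where tf: "0 \<le> t" "t \<le> 1" "\<bar>snd \<phi>\<bar> \<le> 1 - t" "f \<in> D1" "fst \<phi> = (\<lambda>x. t * f x)"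
      unfolding P_def by auto
    have hlip: "\<alpha> * h \<phi> x a - \<beta> * h \<phi> y a \<le> l1norm (\<alpha> *\<^sub>R x - \<beta> *\<^sub>R y)"
      if "x \<in> X" "y \<in> X" "a \<in> A" "0 \<le> \<alpha>" "0 \<le> \<beta>" for x y a \<alpha> \<beta>
    proof -
      let ?N = "l1norm (\<alpha> *\<^sub>R x - \<beta> *\<^sub>R y)"
      let ?D1 = "\<alpha> * lin_ext f (q x a) - \<beta> * lin_ext f (q y a)"
      let ?D2 = "\<alpha> * g x a - \<beta> * g y a"
      have d1: "\<bar>?D1\<bar> \<le> ?N" using q_lip that tf(4) by blast
      have d2: "\<bar>?D2\<bar> \<le> ?N" using g_lip that by blast
      have "\<alpha> * h \<phi> x a - \<beta> * h \<phi> y a = t * ?D1 + snd \<phi> * ?D2"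
        unfolding h_def tf(5) lin_ext_scale by (simp add: algebra_simps)
      also have "\<dots> \<le> t * ?N + \<bar>snd \<phi>\<bar> * ?N"
      proof (rule add_mono)
        show "t * ?D1 \<le> t * ?N" using d1 tf(1) by (intro mult_left_mono) auto
        have "snd \<phi> * ?D2 \<le> \<bar>snd \<phi>\<bar> * \<bar>?D2\<bar>" by (metis abs_ge_self abs_mult)
        also have "\<dots> \<le> \<bar>snd \<phi>\<bar> * ?N" using d2 by (intro mult_left_mono) auto
        finally show "snd \<phi> * ?D2 \<le> \<bar>snd \<phi>\<bar> * ?N" .
      qed
      also have "\<dots> = (t + \<bar>snd \<phi>\<bar>) * ?N" by (simp add: distrib_right)
      also have "\<dots> \<le> 1 * ?N" using tf(3) l1norm_nonneg by (intro mult_right_mono) auto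
      finally show ?thesis by simp
    qed
    define H where "H = (\<lambda>z. Max (h \<phi> z ` A0))"
    have Hge: "h \<phi> z a \<le> H z" if "a \<in> A0" for z a
      unfolding H_def using finA0 that by (intro Max_ge) auto
    have Hin: "\<exists>a\<in>A0. h \<phi> z a = H z" for z
    proof -
      have "H z \<in> h \<phi> z ` A0" unfolding H_def using finA0 A0ne by (intro Max_in) auto
      then show ?thesis by auto
    qed
    then obtain pick where pick: "\<And>z. pick z \<in> A0 \<and> h \<phi> z (pick z) = H z" by metis
    define p where "p = (\<lambda>y. if y \<in> S' then pick y else undefined)"
    have pJ: "p \<in> J" unfolding J_def p_def using pick by (auto simp: PiE_iff extensional_def)
    have Mp: "M p \<phi> = C \<phi> - (\<Sum>y\<in>S'. u' y * H y)"
      unfolding M_def p_def using pick by simp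
    have CH: "C \<phi> \<le> (\<Sum>x\<in>S. u x * H x)"
      unfolding C_def
    proof (rule sum_mono)
      fix x assume x: "x \<in> S"
      have "(\<Sum>a\<in>fsupp (\<sigma> x). \<sigma> x a * h \<phi> x a) \<le> (\<Sum>a\<in>fsupp (\<sigma> x). \<sigma> x a * H x)"
      proof (rule sum_mono)
        fix a assume "a \<in> fsupp (\<sigma> x)"
        then have "a \<in> A0" using x A0_def by auto
        then show "\<sigma> x a * h \<phi> x a \<le> \<sigma> x a * H x"
          using Hge fin_dist_nonneg \<sigma> x SX by (meson mult_left_mono subsetD)
      qed
      also have "\<dots> = H x" using \<sigma> x SX by (simp add: sum_distrib_right[symmetric] fin_dist_def subset_iff)
      finally show "u x * (\<Sum>a\<in>fsupp (\<sigma> x). \<sigma> x a * h \<phi> x a) \<le> u x * H x"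
        using fin_dist_nonneg[OF u] by (intro mult_left_mono) auto
    qed
    define T where "T = S \<union> S'"
    have Tlip: "\<forall>x\<in>T. \<forall>y\<in>T. \<forall>\<alpha> \<beta>. 0 \<le> \<alpha> \<longrightarrow> 0 \<le> \<beta> \<longrightarrow>
               \<alpha> * H x - \<beta> * H y \<le> l1norm (\<alpha> *\<^sub>R x - \<beta> *\<^sub>R y)"
    proof (intro ballI allI impI)
      fix x y and \<alpha> \<beta> :: real assume xy: "x \<in> T" "y \<in> T" "0 \<le> \<alpha>" "0 \<le> \<beta>"
      have xX: "x \<in> X" "y \<in> X" using xy SX T_def by auto
      have pa: "pick x \<in> A" using pick A0A by auto
      have "\<beta> * h \<phi> y (pick x) \<le> \<beta> * H y" using Hge pick xy(4) by (intro mult_left_mono) auto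
      then have "\<alpha> * H x - \<beta> * H y \<le> \<alpha> * h \<phi> x (pick x) - \<beta> * h \<phi> y (pick x)"
        using pick[of x] by simp
      also have "\<dots> \<le> l1norm (\<alpha> *\<^sub>R x - \<beta> *\<^sub>R y)" using hlip xX pa xy by blast
      finally show "\<alpha> * H x - \<beta> * H y \<le> l1norm (\<alpha> *\<^sub>R x - \<beta> *\<^sub>R y)" .
    qed
    obtain fe where fe: "fe \<in> D1" "\<forall>x\<in>T. fe x = H x"
      using D1_extension[of T H] finS Sne SX X_sub Tlip T_def by auto
    have "lin_ext fe u = (\<Sum>x\<in>S. u x * H x)" unfolding lin_ext_def S_def[symmetric]
      using fe T_def by (intro sum.cong) auto
    moreover have "lin_ext fe u' = (\<Sum>x\<in>S'. u' x * H x)" unfolding lin_ext_def S'_def[symmetric]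
      using fe T_def by (intro sum.cong) auto
    ultimately have "(\<Sum>x\<in>S. u x * H x) - (\<Sum>x\<in>S'. u' x * H x) \<le> d0"
      using dstar_ge[OF fe(1) u u' X_sub] d0_def by simp
    then show "\<exists>p\<in>J. M p \<phi> \<le> d0" using pJ Mp CH by (intro bexI[of _ p]) auto
  qed
  obtain \<mu> where \<mu>: "\<forall>j\<in>J. 0 \<le> \<mu> j" "sum \<mu> J = 1" "\<forall>\<phi>\<in>P. (\<Sum>j\<in>J. \<mu> j * M j \<phi>) \<le> d0"
  proof -
    have MmixP: "\<forall>j\<in>J. \<forall>\<phi>\<in>P. \<forall>\<psi>\<in>P. \<forall>s\<in>{0..1}. M j (mix s \<phi> \<psi>) = s * M j \<phi> + (1-s) * M j \<psi>"
      using Mmix by blast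
    note mm = spec[OF mm_finite[OF finJ Jne, where mix=mix and M=M and d=d0], of P]
    show ?thesis using mp[OF mp[OF mp[OF mm clP] MmixP] best] that by blast
  qed
  define \<sigma>' where "\<sigma>' = (\<lambda>x. if x \<in> S' then (\<lambda>a. sum \<mu> {p\<in>J. p x = a}) else \<sigma> x)"
  have fsS': "fsupp (\<sigma>' y) \<subseteq> A0" if "y \<in> S'" for y
  proof
    fix a assume "a \<in> fsupp (\<sigma>' y)"
    then have "sum \<mu> {p\<in>J. p y = a} \<noteq> 0" unfolding fsupp_def \<sigma>'_def using that by auto
    then have "{p\<in>J. p y = a} \<noteq> {}" by (metis sum.empty)
    then show "a \<in> A0" using JA0 that by auto
  qed
  have grp: "(\<Sum>a\<in>A0. \<sigma>' y a * k a) = (\<Sum>p\<in>J. \<mu> p * k (p y))" if "y \<in> S'" for y k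
  proof -
    have "(\<Sum>p\<in>J. \<mu> p * k (p y)) = (\<Sum>a\<in>A0. \<Sum>p\<in>{p\<in>J. p y = a}. \<mu> p * k (p y))"
      by (rule sum.group[symmetric]) (use finJ finA0 JA0 that in auto)
    also have "\<dots> = (\<Sum>a\<in>A0. \<sigma>' y a * k a)"
      unfolding \<sigma>'_def using that by (auto simp: sum_distrib_right intro!: sum.cong)
    finally show ?thesis by simp
  qed
  have \<sigma>'ok: "\<forall>x\<in>X. \<sigma>' x \<in> fin_dist A"
  proof
    fix x assume x: "x \<in> X"
    show "\<sigma>' x \<in> fin_dist A"
    proof (cases "x \<in> S'")
      case True
      have "sum (\<sigma>' x) (fsupp (\<sigma>' x)) = sum (\<sigma>' x) A0"
        by (rule sum.mono_neutral_left) (use finA0 fsS' True in \<open>auto simp: fsupp_def\<close>)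
      also have "\<dots> = 1" using grp[OF True, of "\<lambda>_. 1"] \<mu>(2) by simp
      finally have "sum (\<sigma>' x) (fsupp (\<sigma>' x)) = 1" .
      moreover have "0 \<le> \<sigma>' x a" for a unfolding \<sigma>'_def using True \<mu>(1) by (auto intro: sum_nonneg)
      ultimately show ?thesis unfolding fin_dist_def using fsS'[OF True] A0A finA0
        by (auto intro: finite_subset)
    next
      case False
      then show ?thesis using \<sigma> x \<sigma>'_def by simp
    qed
  qed
  define w where "w = elt q g u \<sigma>"
  define w' where "w' = elt q g u' \<sigma>'"
  have payid: "(lin_ext F (fst w) + e * snd w) - (lin_ext F (fst w') + e * snd w')
      = (\<Sum>p\<in>J. \<mu> p * M p (F, e))" for F e
  proof -
    have 1: "lin_ext F (fst w) + e * snd w = C (F, e)"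
      unfolding w_def C_def S_def h_def fst_conv snd_conv
      by (rule pay_elt[OF u]) (use \<sigma> SX fin_dist_fin fin_dist_sub qfin S_def in blast)
    have 2: "lin_ext F (fst w') + e * snd w' = (\<Sum>y\<in>S'. u' y * (\<Sum>a\<in>A0. \<sigma>' y a * h (F, e) y a))"
      unfolding w'_def S'_def h_def fst_conv snd_conv
      by (rule pay_elt[OF u']) (use fsS' finA0 SX A0A qfin S'_def in blast)
    have "(\<Sum>p\<in>J. \<mu> p * M p (F, e)) = (\<Sum>p\<in>J. \<mu> p * C (F, e)) - (\<Sum>p\<in>J. \<mu> p * (\<Sum>y\<in>S'. u' y * h (F, e) y (p y)))"
      unfolding M_def by (simp add: right_diff_distrib sum_subtractf)
    also have "(\<Sum>p\<in>J. \<mu> p * C (F, e)) = C (F, e)" using \<mu>(2) by (simp add: sum_distrib_right[symmetric])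
    also have "(\<Sum>p\<in>J. \<mu> p * (\<Sum>y\<in>S'. u' y * h (F, e) y (p y))) = (\<Sum>y\<in>S'. u' y * (\<Sum>p\<in>J. \<mu> p * h (F, e) y (p y)))"
      by (simp add: sum_distrib_left sum.swap[of _ J] mult.left_commute)
    also have "\<dots> = (\<Sum>y\<in>S'. u' y * (\<Sum>a\<in>A0. \<sigma>' y a * h (F, e) y a))"
      using grp by (intro sum.cong) auto
    finally show ?thesis using 1 2 by simp
  qed
  have bnd: "(lin_ext F (fst w) + e * snd w) - (lin_ext F (fst w') + e * snd w') \<le> d0"
    if "(F, e) \<in> P" for F e using payid \<mu>(3) that by simp
  have "dstar (fst w) (fst w') \<le> d0"
    unfolding dstar_def
  proof (rule cSUP_least)
    show "D1 \<noteq> {}" using zero_D1 by blast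
    fix f :: "real^'k \<Rightarrow> real" assume f: "f \<in> D1"
    have "(f, 0) \<in> P" unfolding P_def using f by (auto intro!: exI[of _ 1])
    then show "lin_ext f (fst w) - lin_ext f (fst w') \<le> d0" using bnd[of f 0] by simp
  qed
  moreover have "\<bar>snd w - snd w'\<bar> \<le> d0"
  proof -
    have "((\<lambda>x. 0), 1) \<in> P" "((\<lambda>x. 0), -1) \<in> P" unfolding P_def using zero_D1
      by (auto intro!: exI[of _ 0])
    then show ?thesis using bnd[of "\<lambda>x. 0" 1] bnd[of "\<lambda>x. 0" "-1"] by simp
  qed
  ultimately show ?thesis using \<sigma>'ok unfolding w_def w'_def d0_def by blast
qed


theorem mainTheorem16:
  fixes X :: "(real^'k) set" and A :: "'a set"
    and q :: "real^'k \<Rightarrow> 'a \<Rightarrow> (real^'k \<Rightarrow> real)"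
    and g :: "real^'k \<Rightarrow> 'a \<Rightarrow> real"
  assumes X_compact: "compact X" and X_sub: "X \<subseteq> Delta_K"
    and q_dist: "\<forall>x\<in>X. \<forall>a\<in>A. q x a \<in> fin_dist X"
    and g_range: "\<forall>x\<in>X. \<forall>a\<in>A. 0 \<le> g x a \<and> g x a \<le> 1"
    and q_lip: "\<forall>x\<in>X. \<forall>y\<in>X. \<forall>a\<in>A. \<forall>f\<in>D1. \<forall>\<alpha> \<beta>. 0 \<le> \<alpha> \<longrightarrow> 0 \<le> \<beta> \<longrightarrow>
        \<bar>\<alpha> * lin_ext f (q x a) - \<beta> * lin_ext f (q y a)\<bar> \<le> l1norm (\<alpha> *\<^sub>R x - \<beta> *\<^sub>R y)"
    and g_lip: "\<forall>x\<in>X. \<forall>y\<in>X. \<forall>a\<in>A. \<forall>\<alpha> \<beta>. 0 \<le> \<alpha> \<longrightarrow> 0 \<le> \<beta> \<longrightarrow>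
        \<bar>\<alpha> * g x a - \<beta> * g y a\<bar> \<le> l1norm (\<alpha> *\<^sub>R x - \<beta> *\<^sub>R y)"
  shows "(\<forall>z\<in>Zset X. \<forall>z'\<in>Zset X. \<forall>l\<in>{0..1}.
            Fhat X A q g (zcomb l z z') =
              {zcomb l w w' | w w'. w \<in> Fhat X A q g z \<and> w' \<in> Fhat X A q g z'})
       \<and> (\<forall>z\<in>Zset X. \<forall>z'\<in>Zset X. \<forall>w\<in>Fhat X A q g z.
            \<exists>w'\<in>Fhat X A q g z'. dZ w w' \<le> dZ z z')"
proof (intro conjI ballI)
  fix z z' and l :: real
  assume z: "z \<in> Zset X" and z': "z' \<in> Zset X" and l: "l \<in> {0..1}"
  obtain u y where uy: "z = (u, y)" "u \<in> fin_dist X" using z unfolding Zset_def by auto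
  obtain u' y' where uy': "z' = (u', y')" "u' \<in> fin_dist X" using z' unfolding Zset_def by auto
  show "Fhat X A q g (zcomb l z z') =
              {zcomb l w w' | w w'. w \<in> Fhat X A q g z \<and> w' \<in> Fhat X A q g z'}"
    unfolding uy(1) uy'(1) by (rule affine_part[OF uy(2) uy'(2) l])
next
  fix z z' w
  assume z: "z \<in> Zset X" and z': "z' \<in> Zset X" and w: "w \<in> Fhat X A q g z"
  obtain u y where uy: "z = (u, y)" "u \<in> fin_dist X" using z unfolding Zset_def by auto
  obtain u' y' where uy': "z' = (u', y')" "u' \<in> fin_dist X" using z' unfolding Zset_def by auto
  obtain \<sigma> where \<sigma>: "\<forall>x\<in>X. \<sigma> x \<in> fin_dist A" "w = elt q g u \<sigma>"
    using w unfolding Fhat_elt uy(1) by auto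
  obtain \<sigma>' where \<sigma>': "\<forall>x\<in>X. \<sigma>' x \<in> fin_dist A"
      "dstar (fst (elt q g u \<sigma>)) (fst (elt q g u' \<sigma>')) \<le> dstar u u'"
      "\<bar>snd (elt q g u \<sigma>) - snd (elt q g u' \<sigma>')\<bar> \<le> dstar u u'"
    using nonexp_part[OF X_sub q_dist q_lip g_lip uy(2) uy'(2) \<sigma>(1)] by blast
  have w': "elt q g u' \<sigma>' \<in> Fhat X A q g z'" unfolding Fhat_elt uy'(1) using \<sigma>'(1) by auto
  have "dZ w (elt q g u' \<sigma>') \<le> dstar u u'" unfolding dZ_def \<sigma>(2) using \<sigma>'(2,3) by simp
  also have "dstar u u' \<le> dZ z z'" unfolding dZ_def uy(1) uy'(1) by simp
  finally show "\<exists>w'\<in>Fhat X A q g z'. dZ w w' \<le> dZ z z'" using w' by blast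
qed

end
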